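(* Let $k=\mathbb C$, $n\ge2$, $A=\mathbb C_{-1}[x_1,\dots,x_n]$, and let $M(n,1,2)$ be the subgroup of $\mathrm{Aut}(A)$ generated by the mystic reflections $\tau_{i,j,1}$ ($i\ne j$), identified via its action on $A_1$ in the basis $x_1,\dots,x_n$ with a group of $n\times n$ matrices. Then $M(n,1,2)$ is the group of $n\times n$ signed permutation matrices (permutation matrices with entries replaced by $\pm1$) of determinant $1$, of order $2^{n-1}n!$, and $M(n,1,2)$ is isomorphic to the classical reflection group $G(2,2,n)$ if and only if $n$ is odd.
   Context: $A=\mathbb C_{-1}[x_1,\dots,x_n]$ is generated by $x_1,\dots,x_n$ with $x_jx_i=-x_ix_j$ for $i\ne j$. For $s\ne t$, $\tau_{s,t,1}$ is the graded automorphism with $x_s\mapsto x_t$, $x_t\mapsto-x_s$, $x_i\mapsto x_i$ otherwise. $G(2,2,n)$ is the group of $n\times n$ matrices $DP$ with $P$ a permutation matrix and $D$ a diagonal matrix with entries $\pm1$ containing an even number of $-1$'s. *)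

theory Defs
  imports "Jordan_Normal_Form.Matrix" "Jordan_Normal_Form.Determinant" "HOL-Algebra.Generated_Groups"
    "HOL-Combinatorics.Permutations"
begin

text \<open>Matrix (in the basis x_1..x_n, indices 0..n-1) of the action on A_1 of tau_{s,t,1}:
  x_s maps to x_t, x_t maps to -x_s, all other x_i fixed.  Column j is the image of x_j.\<close>
definition tau_mat :: "nat \<Rightarrow> nat \<Rightarrow> nat \<Rightarrow> complex mat" where
  "tau_mat n s t = mat n n (\<lambda>(i,j).
     if j = s then (if i = t then 1 else 0)
     else if j = t then (if i = s then -1 else 0)
     else if i = j then 1 else 0)"

definition GLc :: "nat \<Rightarrow> complex mat monoid" where
  "GLc n = units_of (ring_mat TYPE(complex) n ())"

definition M_n12 :: "nat \<Rightarrow> complex mat set" where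
  "M_n12 n = generate (GLc n) {tau_mat n s t | s t. s < n \<and> t < n \<and> s \<noteq> t}"

definition signed_perm_mat :: "nat \<Rightarrow> complex mat \<Rightarrow> bool" where
  "signed_perm_mat n A \<longleftrightarrow> A \<in> carrier_mat n n \<and>
     (\<exists>p. p permutes {..<n} \<and>
        (\<forall>i<n. \<forall>j<n. if i = p j then A $$ (i,j) \<in> {1, -1} else A $$ (i,j) = 0))"

definition perm_matrix :: "nat \<Rightarrow> (nat \<Rightarrow> nat) \<Rightarrow> complex mat" where
  "perm_matrix n p = mat n n (\<lambda>(i,j). if i = p j then 1 else 0)"

definition G22n :: "nat \<Rightarrow> complex mat set" where
  "G22n n = {D * P | D P. (\<exists>d. (\<forall>i<n. d i \<in> {1, -1}) \<and> even (card {i. i < n \<and> d i = -1}) \<and>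
                                 D = mat n n (\<lambda>(i,j). if i = j then d i else 0)) \<and>
                           (\<exists>p. p permutes {..<n} \<and> P = perm_matrix n p)}"

end

theory Submission
  imports Defs "HOL-Combinatorics.Cycles"
begin

definition SP :: "nat \<Rightarrow> (nat \<Rightarrow> nat) \<Rightarrow> (nat \<Rightarrow> complex) \<Rightarrow> complex mat" where
  "SP n p d = mat n n (\<lambda>(i,j). if i = p j then d j else 0)"

definition Sg :: "nat \<Rightarrow> (nat \<Rightarrow> complex) set" where
  "Sg n = {d. (\<forall>j<n. d j = 1 \<or> d j = -1) \<and> (\<forall>j. n \<le> j \<longrightarrow> d j = 1)}"

lemma SP_carrier[simp]: "SP n p d \<in> carrier_mat n n"
  by (simp add: SP_def)

lemma SP_dims[simp]: "dim_row (SP n p d) = n" "dim_col (SP n p d) = n"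
  by (simp_all add: SP_def)

lemma SP_index[simp]: "i < n \<Longrightarrow> j < n \<Longrightarrow> SP n p d $$ (i,j) = (if i = p j then d j else 0)"
  by (simp add: SP_def)

lemma permutes_lt: "p permutes {..<n} \<Longrightarrow> j < n \<Longrightarrow> p j < n"
  by (metis lessThan_iff permutes_in_image)

lemma SP_mult:
  assumes p: "p permutes {..<n}" and q: "q permutes {..<n}"
  shows "SP n p d * SP n q e = SP n (p \<circ> q) (\<lambda>j. d (q j) * e j)"
proof (rule eq_matI)
  fix i j assume i: "i < dim_row (SP n (p \<circ> q) (\<lambda>j. d (q j) * e j))"
    and j: "j < dim_col (SP n (p \<circ> q) (\<lambda>j. d (q j) * e j))"
  hence i: "i < n" and j: "j < n" by auto
  have qj: "q j < n" using permutes_lt[OF q j] .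
  have "(SP n p d * SP n q e) $$ (i,j) = (\<Sum>k\<in>{0..<n}. SP n p d $$ (i,k) * SP n q e $$ (k,j))"
    using i j by (simp add: scalar_prod_def)
  also have "\<dots> = (\<Sum>k\<in>{0..<n}. if k = q j then (if i = p k then d k * e j else 0) else 0)"
    by (rule sum.cong, auto simp: i j)
  also have "\<dots> = (if i = p (q j) then d (q j) * e j else 0)"
    using qj by (simp add: sum.delta')
  finally show "(SP n p d * SP n q e) $$ (i,j) = SP n (p \<circ> q) (\<lambda>j. d (q j) * e j) $$ (i,j)"
    using i j by simp
qed auto

lemma SP_one: "SP n id (\<lambda>_. 1) = 1\<^sub>m n"
  by (rule eq_matI) auto

lemma Sg_mem: "d \<in> Sg n \<Longrightarrow> j < n \<Longrightarrow> d j = 1 \<or> d j = -1"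
  and Sg_out: "d \<in> Sg n \<Longrightarrow> n \<le> j \<Longrightarrow> d j = 1"
  by (auto simp: Sg_def)

lemma Sg_sq: "d \<in> Sg n \<Longrightarrow> d j * d j = 1"
  unfolding Sg_def by (cases "j < n") auto

lemma Sg_nz: "d \<in> Sg n \<Longrightarrow> d j \<noteq> 0"
  using Sg_sq[of d n j] by auto

lemma Sg_mult: "p permutes {..<n} \<Longrightarrow> d \<in> Sg n \<Longrightarrow> e \<in> Sg n \<Longrightarrow> (\<lambda>j. d (p j) * e j) \<in> Sg n"
  unfolding Sg_def using permutes_lt[of p n] permutes_not_in[of p "{..<n}"]
  by (auto; metis (no_types, lifting) mult_1 mult_minus_left mult_1_right mult_minus1 lessThan_iff not_le minus_minus)

lemma SP_eq_iff:
  assumes p: "p permutes {..<n}" and q: "q permutes {..<n}" and d: "d \<in> Sg n" and e: "e \<in> Sg n"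
  shows "SP n p d = SP n q e \<longleftrightarrow> p = q \<and> d = e"
proof
  assume eq: "SP n p d = SP n q e"
  have pq: "p j = q j \<and> d j = e j" if j: "j < n" for j
  proof -
    have "SP n p d $$ (p j, j) = d j" using j permutes_lt[OF p j] by simp
    hence "SP n q e $$ (p j, j) = d j" using eq by simp
    hence "(if p j = q j then e j else 0) = d j" using j permutes_lt[OF p j] by simp
    thus ?thesis using Sg_nz[OF d, of j] by (auto split: if_splits)
  qed
  have "p = q"
  proof
    fix j show "p j = q j"
      using pq[of j] permutes_not_in[OF p, of j] permutes_not_in[OF q, of j] by (cases "j < n") auto
  qed
  moreover have "d = e"
  proof
    fix j show "d j = e j"
      using pq[of j] Sg_out[OF d, of j] Sg_out[OF e, of j] by (cases "j < n") auto
  qed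
  ultimately show "p = q \<and> d = e" ..
qed auto

lemma SP_det:
  assumes p: "p permutes {..<n}"
  shows "det (SP n p d) = of_int (sign p) * (\<Prod>j<n. d j)"
proof -
  have P: "{0..<n} = {..<n}" by auto
  have "det (SP n p d) = (\<Sum>q | q permutes {..<n}. of_int (sign q) * (\<Prod>j<n. SP n p d $$ (q j, j)))"
    using det_col[OF SP_carrier[of n p d]] P by simp
  also have "\<dots> = (\<Sum>q | q permutes {..<n}. if q = p then of_int (sign p) * (\<Prod>j<n. d j) else 0)"
  proof (rule sum.cong[OF refl])
    fix q assume q: "q \<in> {q. q permutes {..<n}}"
    hence q: "q permutes {..<n}" by simp
    show "of_int (sign q) * (\<Prod>j<n. SP n p d $$ (q j, j)) = (if q = p then of_int (sign p) * (\<Prod>j<n. d j) else 0)"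
    proof (cases "q = p")
      case True
      have "(\<Prod>j<n. SP n p d $$ (p j, j)) = (\<Prod>j<n. d j)"
        by (rule prod.cong) (auto simp: permutes_lt[OF p])
      thus ?thesis using True by simp
    next
      case False
      then obtain j where "q j \<noteq> p j" by auto
      hence j: "j < n" using permutes_not_in[OF p, of j] permutes_not_in[OF q, of j] by (cases "j < n") auto
      have "SP n p d $$ (q j, j) = 0" using j permutes_lt[OF q j] \<open>q j \<noteq> p j\<close> by simp
      hence "(\<Prod>j<n. SP n p d $$ (q j, j)) = 0" using j by (intro prod_zero) auto
      thus ?thesis using False by simp
    qed
  qed
  also have "\<dots> = of_int (sign p) * (\<Prod>j<n. d j)"
    using p by (subst sum.delta) (auto simp: finite_permutations)
  finally show ?thesis .
qed


definition SPall :: "nat \<Rightarrow> complex mat set" where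
  "SPall n = {SP n p d | p d. p permutes {..<n} \<and> d \<in> Sg n}"

lemma one_Sg: "(\<lambda>_. 1) \<in> Sg n" by (simp add: Sg_def)

lemma SP_inv:
  assumes p: "p permutes {..<n}" and d: "d \<in> Sg n"
  shows "SP n p d * SP n (Hilbert_Choice.inv p) (\<lambda>j. d (Hilbert_Choice.inv p j)) = 1\<^sub>m n"
    "SP n (Hilbert_Choice.inv p) (\<lambda>j. d (Hilbert_Choice.inv p j)) * SP n p d = 1\<^sub>m n"
    "(\<lambda>j. d (Hilbert_Choice.inv p j)) \<in> Sg n"
proof -
  have ip: "Hilbert_Choice.inv p permutes {..<n}" using permutes_inv[OF p] .
  have e1: "(\<lambda>j. d (Hilbert_Choice.inv p j) * d (Hilbert_Choice.inv p j)) = (\<lambda>_. 1)"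
    using Sg_sq[OF d] by auto
  have e2: "(\<lambda>j. d (Hilbert_Choice.inv p (p j)) * d j) = (\<lambda>_. 1)"
    using Sg_sq[OF d] permutes_inverses(2)[OF p] by auto
  show "SP n p d * SP n (Hilbert_Choice.inv p) (\<lambda>j. d (Hilbert_Choice.inv p j)) = 1\<^sub>m n"
    unfolding SP_mult[OF p ip] SP_one[symmetric] permutes_inv_o(1)[OF p] e1 ..
  show "SP n (Hilbert_Choice.inv p) (\<lambda>j. d (Hilbert_Choice.inv p j)) * SP n p d = 1\<^sub>m n"
    unfolding SP_mult[OF ip p] SP_one[symmetric] permutes_inv_o(2)[OF p] e2 ..
  show "(\<lambda>j. d (Hilbert_Choice.inv p j)) \<in> Sg n"
    using Sg_mult[OF ip d one_Sg] by simp
qed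

lemma SPall_units: "SPall n \<subseteq> carrier (GLc n)"
proof
  fix A assume "A \<in> SPall n"
  then obtain p d where p: "p permutes {..<n}" and d: "d \<in> Sg n" and A: "A = SP n p d"
    unfolding SPall_def by auto
  have "SP n (Hilbert_Choice.inv p) (\<lambda>j. d (Hilbert_Choice.inv p j)) \<in> carrier_mat n n" by simp
  moreover have "SP n p d \<in> carrier_mat n n" by simp
  ultimately show "A \<in> carrier (GLc n)"
    unfolding GLc_def units_of_carrier Units_def ring_mat_simps A
    using SP_inv(1,2)[OF p d] by blast
qed

lemma GLc_simps: "mult (GLc n) = (*)" "one (GLc n) = 1\<^sub>m n"
  "carrier (GLc n) = Units (ring_mat TYPE(complex) n ())"
  by (simp_all add: GLc_def units_of_def ring_mat_simps)

lemma GLc_group: "group (GLc n)"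
  unfolding GLc_def using ring_mat[of n "()"] by (intro monoid.units_group) (auto simp: ring_def ring_mat_simps)

lemma GLc_inv_SP:
  assumes p: "p permutes {..<n}" and d: "d \<in> Sg n"
  shows "inv\<^bsub>GLc n\<^esub> (SP n p d) = SP n (Hilbert_Choice.inv p) (\<lambda>j. d (Hilbert_Choice.inv p j))"
proof -
  interpret group "GLc n" by (rule GLc_group)
  have c: "SP n p d \<in> carrier (GLc n)" "SP n (Hilbert_Choice.inv p) (\<lambda>j. d (Hilbert_Choice.inv p j)) \<in> carrier (GLc n)"
    using SPall_units[of n] p d SP_inv(3)[OF p d] permutes_inv[OF p] unfolding SPall_def by blast+
  show ?thesis
    by (rule inv_equality) (use c SP_inv[OF p d] in \<open>auto simp: GLc_simps\<close>)
qed

lemma tau_SP: "tau_mat n s t = SP n (Transposition.transpose s t) (\<lambda>j. if j = t \<and> s \<noteq> t then -1 else 1)"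
  by (rule eq_matI) (auto simp: tau_mat_def Transposition.transpose_def)


lemma signed_perm_SPall: "signed_perm_mat n A \<longleftrightarrow> A \<in> SPall n"
proof
  assume "signed_perm_mat n A"
  then obtain p where A: "A \<in> carrier_mat n n" and p: "p permutes {..<n}"
    and ent: "\<forall>i<n. \<forall>j<n. if i = p j then A $$ (i,j) \<in> {1, -1} else A $$ (i,j) = 0"
    unfolding signed_perm_mat_def by blast
  define d where "d = (\<lambda>j. if j < n then A $$ (p j, j) else 1)"
  have d: "d \<in> Sg n" unfolding Sg_def d_def
  proof (intro CollectI conjI allI impI)
    fix j assume j: "j < n"
    have "if p j = p j then A $$ (p j, j) \<in> {1,-1} else A $$ (p j, j) = 0"
      using ent permutes_lt[OF p j] j by blast
    hence "A $$ (p j, j) \<in> {1,-1}" by simp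
    thus "(if j < n then A $$ (p j, j) else 1) = 1 \<or> (if j < n then A $$ (p j, j) else 1) = - 1"
      using j by auto
  qed auto
  have "A = SP n p d"
  proof (rule eq_matI)
    fix i j assume "i < dim_row (SP n p d)" "j < dim_col (SP n p d)"
    hence i: "i < n" and j: "j < n" by auto
    show "A $$ (i, j) = SP n p d $$ (i, j)"
      using ent i j by (auto simp: d_def)
  qed (use A in auto)
  thus "A \<in> SPall n" unfolding SPall_def using p d by auto
next
  assume "A \<in> SPall n"
  then obtain p d where p: "p permutes {..<n}" and d: "d \<in> Sg n" and A: "A = SP n p d"
    unfolding SPall_def by auto
  show "signed_perm_mat n A"
    unfolding signed_perm_mat_def A using p Sg_mem[OF d] by auto
qed

definition Mset :: "nat \<Rightarrow> complex mat set" where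
  "Mset n = {A \<in> SPall n. det A = 1}"

lemma SPall_mult: "A \<in> SPall n \<Longrightarrow> B \<in> SPall n \<Longrightarrow> A * B \<in> SPall n"
proof -
  assume "A \<in> SPall n" "B \<in> SPall n"
  then obtain p d q e where p: "p permutes {..<n}" and d: "d \<in> Sg n" and A: "A = SP n p d"
    and q: "q permutes {..<n}" and e: "e \<in> Sg n" and B: "B = SP n q e"
    unfolding SPall_def by auto
  show ?thesis unfolding A B SP_mult[OF p q] SPall_def
    using permutes_compose[OF q p] Sg_mult[OF q d e] by blast
qed

lemma SPall_one: "1\<^sub>m n \<in> SPall n"
  unfolding SPall_def SP_one[symmetric] using permutes_id one_Sg by blast

lemma SPall_inv: "A \<in> SPall n \<Longrightarrow> inv\<^bsub>GLc n\<^esub> A \<in> SPall n"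
proof -
  assume "A \<in> SPall n"
  then obtain p d where p: "p permutes {..<n}" and d: "d \<in> Sg n" and A: "A = SP n p d"
    unfolding SPall_def by auto
  show ?thesis unfolding A GLc_inv_SP[OF p d] SPall_def
    using permutes_inv[OF p] SP_inv(3)[OF p d] by blast
qed

lemma SPall_carrier: "A \<in> SPall n \<Longrightarrow> A \<in> carrier_mat n n"
  unfolding SPall_def by auto

lemma SPall_inv_prop: "A \<in> SPall n \<Longrightarrow> A * inv\<^bsub>GLc n\<^esub> A = 1\<^sub>m n"
proof -
  interpret group "GLc n" by (rule GLc_group)
  assume "A \<in> SPall n"
  hence "A \<in> carrier (GLc n)" using SPall_units by blast
  thus ?thesis using r_inv[of A] by (simp add: GLc_simps)
qed

lemma Mset_subgroup: "subgroup (Mset n) (GLc n)"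
proof
  show "Mset n \<subseteq> carrier (GLc n)" using SPall_units unfolding Mset_def by blast
  show "x \<otimes>\<^bsub>GLc n\<^esub> y \<in> Mset n" if "x \<in> Mset n" "y \<in> Mset n" for x y
    using that SPall_mult det_mult[OF SPall_carrier SPall_carrier] unfolding Mset_def GLc_simps by auto
  show "\<one>\<^bsub>GLc n\<^esub> \<in> Mset n" using SPall_one unfolding Mset_def GLc_simps by auto
  show "inv\<^bsub>GLc n\<^esub> x \<in> Mset n" if "x \<in> Mset n" for x
  proof -
    have x: "x \<in> SPall n" "det x = 1" using that unfolding Mset_def by auto
    have "det (x * inv\<^bsub>GLc n\<^esub> x) = 1" using SPall_inv_prop[OF x(1)] by simp
    hence "det (inv\<^bsub>GLc n\<^esub> x) = 1"
      using det_mult[OF SPall_carrier[OF x(1)] SPall_carrier[OF SPall_inv[OF x(1)]]] x(2) by simp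
    thus ?thesis using SPall_inv[OF x(1)] unfolding Mset_def by auto
  qed
qed

lemma prod_signs:
  assumes d: "d \<in> Sg n"
  shows "(\<Prod>j<n. d j) = (-1) ^ card {j. j < n \<and> d j = -1}"
proof -
  have "(\<Prod>j<n. d j) = (\<Prod>j<n. if d j = -1 then -1 else 1)"
    by (rule prod.cong) (use Sg_mem[OF d] in auto)
  also have "\<dots> = (\<Prod>j\<in>{..<n} \<inter> {j. d j = -1}. -1) * (\<Prod>j\<in>{..<n} \<inter> - {j. d j = -1}. 1)"
    by (rule prod.If_cases) simp
  also have "\<dots> = (-1) ^ card ({..<n} \<inter> {j. d j = -1})" by simp
  also have "{..<n} \<inter> {j. d j = -1} = {j. j < n \<and> d j = -1}" by auto
  finally show ?thesis .
qed

lemma tau_sign_Sg: "t < n \<Longrightarrow> (\<lambda>j. if j = t \<and> s \<noteq> t then -1 else 1) \<in> Sg n"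
  unfolding Sg_def by auto

lemma tau_in_Mset:
  assumes "s < n" "t < n" "s \<noteq> t"
  shows "tau_mat n s t \<in> Mset n"
proof -
  have tp: "Transposition.transpose s t permutes {..<n}" using assms by (intro permutes_swap_id) auto
  have "(\<Prod>j<n. (if j = t \<and> s \<noteq> t then -1 else 1 :: complex)) = (\<Prod>j<n. (if j = t then -1 else 1))"
    using assms by simp
  also have "\<dots> = -1" using assms by (subst prod.delta) auto
  finally have pr: "(\<Prod>j<n. (if j = t \<and> s \<noteq> t then -1 else 1 :: complex)) = -1" .
  have mem: "tau_mat n s t \<in> SPall n" unfolding tau_SP SPall_def using tp tau_sign_Sg[OF assms(2)] by blast
  have "det (tau_mat n s t) = 1" unfolding tau_SP SP_det[OF tp] pr using assms(3) by (simp add: sign_swap_id)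
  thus ?thesis using mem by (simp add: Mset_def)
qed

definition Tset :: "nat \<Rightarrow> complex mat set" where
  "Tset n = {tau_mat n s t | s t. s < n \<and> t < n \<and> s \<noteq> t}"

lemma M_n12_alt: "M_n12 n = generate (GLc n) (Tset n)"
  unfolding M_n12_def Tset_def ..

lemma M_sub_Mset: "M_n12 n \<subseteq> Mset n"
  unfolding M_n12_alt
  by (rule group.generate_subgroup_incl[OF GLc_group _ Mset_subgroup])
     (auto simp: Tset_def intro: tau_in_Mset)

lemma gen_mult: "A \<in> M_n12 n \<Longrightarrow> B \<in> M_n12 n \<Longrightarrow> A * B \<in> M_n12 n"
  unfolding M_n12_alt using generate.eng[of A "GLc n" "Tset n" B] by (simp add: GLc_simps)

lemma gen_one: "1\<^sub>m n \<in> M_n12 n"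
  unfolding M_n12_alt using generate.one[of "GLc n" "Tset n"] by (simp add: GLc_simps)

lemma gen_tau: "s < n \<Longrightarrow> t < n \<Longrightarrow> s \<noteq> t \<Longrightarrow> tau_mat n s t \<in> M_n12 n"
  unfolding M_n12_alt by (rule generate.incl) (auto simp: Tset_def)

lemma flip_in:
  assumes "s < n" "t < n" "s \<noteq> t"
  shows "SP n id (\<lambda>j. if j = s \<or> j = t then -1 else 1) \<in> M_n12 n"
proof -
  have tp: "Transposition.transpose s t permutes {..<n}" using assms by (intro permutes_swap_id) auto
  have "tau_mat n s t * tau_mat n s t = SP n id (\<lambda>j. if j = s \<or> j = t then -1 else 1)"
    unfolding tau_SP SP_mult[OF tp tp]
    using assms by (auto simp: Transposition.transpose_def intro!: arg_cong[where f="SP n id"])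
  thus ?thesis using gen_mult gen_tau[OF assms] by metis
qed


lemma diag_in_aux:
  "\<forall>e. e \<in> Sg n \<and> card {j. j < n \<and> e j = -1} = k \<and> even k \<longrightarrow> SP n id e \<in> M_n12 n"
proof (induction k rule: less_induct)
  case (less k)
  show ?case
  proof (intro allI impI, elim conjE)
    fix e assume e: "e \<in> Sg n" and k: "card {j. j < n \<and> e j = -1} = k" and ev: "even k"
    define N where "N = {j. j < n \<and> e j = -1}"
    have fN: "finite N" unfolding N_def by simp
    show "SP n id e \<in> M_n12 n"
    proof (cases "k = 0")
      case True
      hence "N = {}" using fN k unfolding N_def by simp
      hence "e = (\<lambda>_. 1)"
        using Sg_mem[OF e] Sg_out[OF e] unfolding N_def by (intro ext) (metis (mono_tags) empty_iff mem_Collect_eq not_le)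
      thus ?thesis using gen_one SP_one by simp
    next
      case False
      hence k2: "k \<ge> 2" using ev by presburger
      hence "card N \<ge> 2" using k N_def by simp
      then obtain s t where s: "s \<in> N" and t: "t \<in> N" and st: "s \<noteq> t"
        by (metis One_nat_def card_le_Suc0_iff_eq not_less_eq_eq numeral_2_eq_2 fN)
      define e' where "e' = (\<lambda>j. if j = s \<or> j = t then 1 else e j)"
      have e': "e' \<in> Sg n" using e unfolding e'_def Sg_def by auto
      have N': "{j. j < n \<and> e' j = -1} = N - {s,t}"
        unfolding N_def e'_def by auto
      have cN': "card {j. j < n \<and> e' j = -1} = k - 2"
        unfolding N' using s t st fN k N_def by (simp add: card_Diff_subset)
      have "SP n id e' \<in> M_n12 n"
        using less.IH[of "k - 2"] e' cN' ev k2 by (auto simp: id_def)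
      moreover have "SP n id (\<lambda>j. if j = s \<or> j = t then -1 else 1) \<in> M_n12 n"
        using flip_in s t st unfolding N_def by auto
      moreover have "SP n id e' * SP n id (\<lambda>j. if j = s \<or> j = t then -1 else 1) = SP n id e"
        unfolding SP_mult[OF permutes_id permutes_id]
        using s t unfolding e'_def N_def by (auto intro!: arg_cong[where f="SP n id"])
      ultimately show ?thesis using gen_mult by metis
    qed
  qed
qed

lemma diag_in:
  assumes e: "e \<in> Sg n" and pr: "(\<Prod>j<n. e j) = 1"
  shows "SP n id e \<in> M_n12 n"
proof -
  have "(-1::complex) ^ card {j. j < n \<and> e j = -1} = 1" using pr prod_signs[OF e] by simp
  hence "even (card {j. j < n \<and> e j = -1})"
    by (metis neg_one_odd_power one_neq_neg_one)
  thus ?thesis using diag_in_aux e by blast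
qed

lemma perm_in:
  assumes p: "p permutes {..<n}"
  shows "\<exists>d\<in>Sg n. SP n p d \<in> M_n12 n"
  using p finite_lessThan[of n]
proof (induction p rule: permutes_induct)
  case id
  show ?case using gen_one SP_one one_Sg by metis
next
  case (swap a b p)
  then obtain d where d: "d \<in> Sg n" and pd: "SP n p d \<in> M_n12 n" by blast
  have tp: "Transposition.transpose a b permutes {..<n}" using swap by (intro permutes_swap_id) auto
  have pp: "p permutes {..<n}" using swap by blast
  have "tau_mat n a b * SP n p d \<in> M_n12 n"
    using gen_mult gen_tau pd swap by auto
  moreover have "tau_mat n a b * SP n p d = SP n (Transposition.transpose a b \<circ> p)
      (\<lambda>j. (\<lambda>j. if j = b \<and> a \<noteq> b then -1 else 1) (p j) * d j)"
    unfolding tau_SP SP_mult[OF tp pp] ..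
  moreover have "(\<lambda>j. (\<lambda>j. if j = b \<and> a \<noteq> b then -1 else (1::complex)) (p j) * d j) \<in> Sg n"
    using Sg_mult[OF pp tau_sign_Sg[of b n a] d] swap by auto
  ultimately show ?case by metis
qed

lemma M_eq: "M_n12 n = Mset n"
proof
  show "M_n12 n \<subseteq> Mset n" by (rule M_sub_Mset)
  show "Mset n \<subseteq> M_n12 n"
  proof
    fix A assume A: "A \<in> Mset n"
    then obtain p d where p: "p permutes {..<n}" and d: "d \<in> Sg n" and Ad: "A = SP n p d"
      and dA: "det A = 1" unfolding Mset_def SPall_def by auto
    obtain d' where d': "d' \<in> Sg n" and pd': "SP n p d' \<in> M_n12 n" using perm_in[OF p] by blast
    define e where "e = (\<lambda>j. d' j * d j)"
    have e: "e \<in> Sg n" unfolding e_def using Sg_mult[OF permutes_id d' d] by simp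
    have eq: "SP n p d' * SP n id e = A"
      unfolding SP_mult[OF p permutes_id] Ad e_def comp_id id_apply
      by (rule arg_cong[where f="SP n p"]) (auto simp: mult.assoc[symmetric] Sg_sq[OF d'])
    have "det (SP n p d') = 1" using M_sub_Mset pd' unfolding Mset_def by auto
    hence "det (SP n id e) = 1"
      using det_mult[OF SP_carrier SP_carrier, of n p d' id e] eq dA by simp
    hence "(\<Prod>j<n. e j) = 1" using SP_det[OF permutes_id, of n e] by simp
    hence "SP n id e \<in> M_n12 n" by (rule diag_in[OF e])
    thus "A \<in> M_n12 n" using gen_mult pd' eq by metis
  qed
qed


lemma first_conj: "M_n12 n = {A. signed_perm_mat n A \<and> det A = 1}"
  unfolding M_eq Mset_def signed_perm_SPall by auto

lemma finite_Sg: "finite (Sg n)" and card_Sg: "card (Sg n) = 2 ^ n"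
proof -
  let ?P = "PiE {..<n} (\<lambda>_. {1, -1::complex})"
  have bij: "bij_betw (\<lambda>d. restrict d {..<n}) (Sg n) ?P"
  proof (rule bij_betwI')
    fix x y assume x: "x \<in> Sg n" and y: "y \<in> Sg n"
    show "(restrict x {..<n} = restrict y {..<n}) = (x = y)"
    proof
      assume r: "restrict x {..<n} = restrict y {..<n}"
      show "x = y"
      proof
        fix j show "x j = y j"
        proof (cases "j < n")
          case True thus ?thesis using fun_cong[OF r, of j] by simp
        next
          case False thus ?thesis using Sg_out[OF x] Sg_out[OF y] by simp
        qed
      qed
    qed simp
  next
    fix x assume "x \<in> Sg n" thus "restrict x {..<n} \<in> ?P" using Sg_mem by auto
  next
    fix f assume f: "f \<in> ?P"
    define g where "g = (\<lambda>j. if j < n then f j else 1)"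
    have "g \<in> Sg n" unfolding g_def Sg_def using f by auto
    moreover have "f = restrict g {..<n}"
      using f unfolding g_def by (auto simp: PiE_def extensional_def restrict_def)
    ultimately show "\<exists>x\<in>Sg n. f = restrict x {..<n}" by blast
  qed
  have fP: "finite ?P" by (simp add: finite_PiE)
  have cP: "card ?P = 2 ^ n" by (simp add: card_PiE numeral_2_eq_2)
  show "finite (Sg n)" using bij fP bij_betw_finite by blast
  show "card (Sg n) = 2 ^ n" using bij_betw_same_card[OF bij] cP by simp
qed


lemma prod_Sg_pm: "d \<in> Sg n \<Longrightarrow> (\<Prod>j<n. d j) = 1 \<or> (\<Prod>j<n. d j) = -1"
  using prod_signs[of d n] by (metis neg_one_even_power neg_one_odd_power)

lemma card_Sg_c:
  assumes n: "n \<ge> 1" and c: "c = 1 \<or> c = -1"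
  shows "card {d \<in> Sg n. (\<Prod>j<n. d j) = c} = 2 ^ (n - 1)"
proof -
  define A where "A = (\<lambda>c. {d \<in> Sg n. (\<Prod>j<n. d j) = c})"
  define F where "F = (\<lambda>d::nat \<Rightarrow> complex. d(0 := - d 0))"
  have FF: "F (F d) = d" for d unfolding F_def by auto
  have prF: "(\<Prod>j<n. F d j) = - (\<Prod>j<n. d j)" for d
  proof -
    have z: "0 \<in> {..<n}" using n by simp
    have "(\<Prod>j<n. F d j) = F d 0 * (\<Prod>j\<in>{..<n} - {0}. F d j)" by (rule prod.remove[OF _ z]) simp
    also have "(\<Prod>j\<in>{..<n} - {0}. F d j) = (\<Prod>j\<in>{..<n} - {0}. d j)"
      by (rule prod.cong) (auto simp: F_def)
    also have "(\<Prod>j<n. d j) = d 0 * (\<Prod>j\<in>{..<n} - {0}. d j)" by (rule prod.remove[OF _ z]) simp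
    ultimately show ?thesis by (simp add: F_def)
  qed
  have FS: "d \<in> Sg n \<Longrightarrow> F d \<in> Sg n" for d unfolding F_def Sg_def using n by auto
  have bij: "bij_betw F (A 1) (A (-1))"
  proof (rule bij_betwI[where g=F])
    show "F \<in> A 1 \<rightarrow> A (- 1)" unfolding A_def using FS prF by auto
    show "F \<in> A (-1) \<rightarrow> A 1" unfolding A_def using FS prF by auto
  qed (simp_all add: FF)
  have un: "Sg n = A 1 \<union> A (-1)" unfolding A_def using prod_Sg_pm by auto
  have fin: "finite (A c)" for c unfolding A_def using finite_Sg by simp
  have "card (Sg n) = card (A 1) + card (A (-1))"
    unfolding un by (rule card_Un_disjoint[OF fin fin]) (auto simp: A_def)
  hence "2 * card (A 1) = 2 ^ n" "card (A 1) = card (A (-1))"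
    using bij_betw_same_card[OF bij] card_Sg by auto
  moreover have "(2::nat) ^ n = 2 * 2 ^ (n - 1)" using n by (cases n) auto
  ultimately show ?thesis using c unfolding A_def by auto
qed


lemma card_SPc:
  assumes n: "n \<ge> 1" and c: "\<And>p. c p = 1 \<or> c p = -1"
  shows "card {SP n p d | p d. p permutes {..<n} \<and> d \<in> Sg n \<and> (\<Prod>j<n. d j) = c p} = fact n * 2 ^ (n - 1)"
proof -
  let ?S = "SIGMA p:{p. p permutes {..<n}}. {d \<in> Sg n. (\<Prod>j<n. d j) = c p}"
  have eq: "{SP n p d | p d. p permutes {..<n} \<and> d \<in> Sg n \<and> (\<Prod>j<n. d j) = c p} = (\<lambda>(p,d). SP n p d) ` ?S"
    by auto
  have inj: "inj_on (\<lambda>(p,d). SP n p d) ?S"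
  proof (rule inj_onI)
    fix x y assume x: "x \<in> ?S" and y: "y \<in> ?S" and eq: "(\<lambda>(p,d). SP n p d) x = (\<lambda>(p,d). SP n p d) y"
    obtain p d q e where xy: "x = (p,d)" "y = (q,e)" by fastforce
    have h: "p permutes {..<n}" "d \<in> Sg n" "q permutes {..<n}" "e \<in> Sg n" using x y xy by auto
    have "SP n p d = SP n q e" using eq xy by simp
    thus "x = y" using SP_eq_iff[OF h(1,3,2,4)] xy by simp
  qed
  have "card ?S = (\<Sum>p\<in>{p. p permutes {..<n}}. card {d \<in> Sg n. (\<Prod>j<n. d j) = c p})"
    by (rule card_SigmaI) (auto simp: finite_permutations finite_Sg)
  also have "\<dots> = (\<Sum>p\<in>{p. p permutes {..<n}}. 2 ^ (n - 1))"
    by (rule sum.cong) (auto simp: card_Sg_c[OF n c])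
  also have "\<dots> = fact n * 2 ^ (n - 1)" by (simp add: card_permutations)
  finally show ?thesis unfolding eq card_image[OF inj] .
qed



lemma sign_eq_iff: "of_int (sign p) * x = (1::complex) \<longleftrightarrow> x = of_int (sign p)"
proof (cases rule: sign_cases[of p])
  case odd
  have "- x = 1 \<longleftrightarrow> x = (-1::complex)" by (metis minus_minus)
  thus ?thesis using odd by simp
qed simp

lemma Mset_alt: "Mset n = {SP n p d | p d. p permutes {..<n} \<and> d \<in> Sg n \<and> (\<Prod>j<n. d j) = of_int (sign p)}"
proof (rule subset_antisym; rule subsetI)
  fix A assume "A \<in> Mset n"
  then obtain p d where p: "p permutes {..<n}" and d: "d \<in> Sg n" and A: "A = SP n p d" and "det A = 1"
    unfolding Mset_def SPall_def by auto
  hence "(\<Prod>j<n. d j) = of_int (sign p)" using SP_det[OF p] sign_eq_iff by metis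
  thus "A \<in> {SP n p d | p d. p permutes {..<n} \<and> d \<in> Sg n \<and> (\<Prod>j<n. d j) = of_int (sign p)}"
    using p d A by blast
next
  fix A assume "A \<in> {SP n p d | p d. p permutes {..<n} \<and> d \<in> Sg n \<and> (\<Prod>j<n. d j) = of_int (sign p)}"
  then obtain p d where p: "p permutes {..<n}" and d: "d \<in> Sg n" and A: "A = SP n p d"
    and pr: "(\<Prod>j<n. d j) = of_int (sign p)" by blast
  have "det A = 1" unfolding A SP_det[OF p] pr using sign_eq_iff by metis
  thus "A \<in> Mset n" unfolding Mset_def SPall_def using p d A by blast
qed

lemma sign_pm: "of_int (sign p) = (1::complex) \<or> of_int (sign p) = (-1::complex)"
  by (cases rule: sign_cases[of p]) auto

lemma card_Mset: "n \<ge> 1 \<Longrightarrow> card (Mset n) = 2 ^ (n - 1) * fact n"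
  unfolding Mset_alt using card_SPc[of n "\<lambda>p. of_int (sign p)", OF _ sign_pm] by (simp add: mult.commute)

definition Gset :: "nat \<Rightarrow> complex mat set" where
  "Gset n = {SP n p d | p d. p permutes {..<n} \<and> d \<in> Sg n \<and> (\<Prod>j<n. d j) = 1}"

lemma card_Gset: "n \<ge> 1 \<Longrightarrow> card (Gset n) = 2 ^ (n - 1) * fact n"
  unfolding Gset_def using card_SPc[of n "\<lambda>p. 1"] by (simp add: mult.commute)


lemma perm_matrix_SP: "perm_matrix n p = SP n p (\<lambda>_. 1)"
  by (rule eq_matI) (auto simp: perm_matrix_def)

lemma diag_SP: "mat n n (\<lambda>(i,j). if i = j then d i else 0) = SP n id (\<lambda>j. if j < n then d j else 1)"
  by (rule eq_matI) auto

lemma prod_perm: "p permutes {..<n} \<Longrightarrow> (\<Prod>j<n. d (p j)) = (\<Prod>j<n. d j)"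
  using prod.permute[of p "{..<n}" d] by (simp add: o_def)

lemma G22n_eq: "G22n n = Gset n"
proof (rule subset_antisym; rule subsetI)
  fix X assume "X \<in> G22n n"
  then obtain d p where d: "\<forall>i<n. d i \<in> {1, -1}" and ev: "even (card {i. i < n \<and> d i = -1})"
    and p: "p permutes {..<n}"
    and X: "X = mat n n (\<lambda>(i,j). if i = j then d i else 0) * perm_matrix n p"
    unfolding G22n_def by blast
  define dd where "dd = (\<lambda>j. if j < n then d j else 1)"
  have dd: "dd \<in> Sg n" unfolding dd_def Sg_def using d by auto
  have "{j. j < n \<and> dd j = -1} = {i. i < n \<and> d i = -1}" unfolding dd_def by auto
  hence "(\<Prod>j<n. dd j) = 1" using prod_signs[OF dd] ev by simp
  hence pr: "(\<Prod>j<n. dd (p j) * 1) = 1" using prod_perm[OF p, of dd] by simp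
  have "X = SP n p (\<lambda>j. dd (p j) * 1)"
    unfolding X diag_SP perm_matrix_SP SP_mult[OF permutes_id p] dd_def by simp
  thus "X \<in> Gset n" unfolding Gset_def using p Sg_mult[OF p dd one_Sg] pr by blast
next
  fix X assume "X \<in> Gset n"
  then obtain p d where p: "p permutes {..<n}" and d: "d \<in> Sg n" and X: "X = SP n p d"
    and pr: "(\<Prod>j<n. d j) = 1" unfolding Gset_def by blast
  define dd where "dd = (\<lambda>i. d (Hilbert_Choice.inv p i))"
  have dd: "dd \<in> Sg n" unfolding dd_def using SP_inv(3)[OF p d] .
  have "(\<Prod>j<n. dd j) = 1" unfolding dd_def using prod_perm[OF permutes_inv[OF p], of d] pr by simp
  hence ev: "even (card {i. i < n \<and> dd i = -1})" using prod_signs[OF dd]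
    by (metis neg_one_odd_power one_neq_neg_one)
  have dd': "(\<lambda>j. if j < n then dd j else 1) = dd" using Sg_out[OF dd] by (auto simp: fun_eq_iff)
  have "mat n n (\<lambda>(i,j). if i = j then dd i else 0) * perm_matrix n p = X"
    unfolding diag_SP perm_matrix_SP dd' SP_mult[OF permutes_id p] X dd_def
    using permutes_inverses(2)[OF p]
    by simp (rule arg_cong[where f="SP n p"], use Sg_out[OF d] permutes_lt[OF p] permutes_not_in[OF p] in \<open>auto simp: fun_eq_iff, metis not_le\<close>)
  moreover have "\<forall>i<n. dd i \<in> {1, -1}" using Sg_mem[OF dd] by auto
  ultimately show "X \<in> G22n n" unfolding G22n_def using ev p by blast
qed

lemma Gset_SPall: "Gset n \<subseteq> SPall n" unfolding Gset_def SPall_def by blast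

lemma Gset_subgroup: "subgroup (Gset n) (GLc n)"
proof
  show "Gset n \<subseteq> carrier (GLc n)" using SPall_units Gset_SPall by blast
  show "x \<otimes>\<^bsub>GLc n\<^esub> y \<in> Gset n" if xy: "x \<in> Gset n" "y \<in> Gset n" for x y
  proof -
    obtain p d where p: "p permutes {..<n}" and d: "d \<in> Sg n" and x: "x = SP n p d"
      and pr: "(\<Prod>j<n. d j) = 1" using xy(1) unfolding Gset_def by blast
    obtain q e where q: "q permutes {..<n}" and e: "e \<in> Sg n" and y: "y = SP n q e"
      and pre: "(\<Prod>j<n. e j) = 1" using xy(2) unfolding Gset_def by blast
    have "(\<Prod>j<n. d (q j) * e j) = 1" using prod_perm[OF q, of d] pr pre by (simp add: prod.distrib)
    thus ?thesis unfolding GLc_simps x y SP_mult[OF p q] Gset_def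
      using permutes_compose[OF q p] Sg_mult[OF q d e] by blast
  qed
  show "\<one>\<^bsub>GLc n\<^esub> \<in> Gset n" unfolding GLc_simps SP_one[symmetric] Gset_def
    using permutes_id one_Sg by fastforce
  show "inv\<^bsub>GLc n\<^esub> x \<in> Gset n" if xx: "x \<in> Gset n" for x
  proof -
    obtain p d where p: "p permutes {..<n}" and d: "d \<in> Sg n" and x: "x = SP n p d"
      and pr: "(\<Prod>j<n. d j) = 1" using xx unfolding Gset_def by blast
    have "(\<Prod>j<n. d (Hilbert_Choice.inv p j)) = 1" using prod_perm[OF permutes_inv[OF p], of d] pr by simp
    thus ?thesis unfolding x GLc_inv_SP[OF p d] Gset_def
      using permutes_inv[OF p] SP_inv(3)[OF p d] by blast
  qed
qed


lemma sub_mult[simp]: "mult ((GLc n)\<lparr>carrier := S\<rparr>) = (*)"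
  and sub_one[simp]: "one ((GLc n)\<lparr>carrier := S\<rparr>) = 1\<^sub>m n"
  and sub_carrier[simp]: "carrier ((GLc n)\<lparr>carrier := S\<rparr>) = S"
  by (simp_all add: GLc_simps)

lemma det_Gset:
  assumes "X \<in> Gset n"
  shows "det X = 1 \<or> det X = -1"
proof -
  obtain p d where p: "p permutes {..<n}" and X: "X = SP n p d"
    and pr: "(\<Prod>j<n. d j) = 1" using assms unfolding Gset_def by blast
  show ?thesis unfolding X SP_det[OF p] pr using sign_pm[of p] by simp
qed

lemma pm_even_pow: "c = 1 \<or> c = -1 \<Longrightarrow> even k \<Longrightarrow> (c::complex) ^ k = 1"
  by auto

lemma smult_smult_mat': "a \<cdot>\<^sub>m (b \<cdot>\<^sub>m (A :: complex mat)) = (a * b) \<cdot>\<^sub>m A"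
  by (rule eq_matI) auto

lemma iso_odd:
  assumes odd: "odd n"
  shows "(GLc n)\<lparr>carrier := Mset n\<rparr> \<cong> (GLc n)\<lparr>carrier := Gset n\<rparr>"
proof -
  have n1: "n \<ge> 1" using odd by (cases n) auto
  define \<phi> where "\<phi> = (\<lambda>X::complex mat. det X \<cdot>\<^sub>m X)"
  have img: "\<phi> X \<in> Mset n" if X: "X \<in> Gset n" for X
  proof -
    obtain p d where p: "p permutes {..<n}" and d: "d \<in> Sg n" and Xe: "X = SP n p d"
      using X unfolding Gset_def by blast
    define c where "c = det X"
    have c: "c = 1 \<or> c = -1" using det_Gset[OF X] c_def by simp
    have "\<phi> X = c \<cdot>\<^sub>m SP n p d" unfolding \<phi>_def c_def Xe ..
    also have "\<dots> = SP n p (\<lambda>j. if j < n then c * d j else 1)"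
      by (rule eq_matI) auto
    finally have "\<phi> X = SP n p (\<lambda>j. if j < n then c * d j else 1)" .
    moreover have "(\<lambda>j. if j < n then c * d j else 1) \<in> Sg n"
      using c Sg_mem[OF d] unfolding Sg_def by (auto; metis minus_minus)
    ultimately have "\<phi> X \<in> SPall n" unfolding SPall_def using p by blast
    moreover have "det (\<phi> X) = 1"
    proof -
      have "det (\<phi> X) = c ^ n * c" unfolding \<phi>_def c_def using Xe by simp
      also have "\<dots> = c ^ (n + 1)" by simp
      also have "\<dots> = 1" using pm_even_pow[OF c, of "n+1"] odd by (simp del: power_Suc)
      finally show ?thesis .
    qed
    ultimately show ?thesis unfolding Mset_def by blast
  qed
  have hom: "\<phi> (X * Y) = \<phi> X * \<phi> Y" if "X \<in> Gset n" "Y \<in> Gset n" for X Y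
  proof -
    have X: "X \<in> carrier_mat n n" and Y: "Y \<in> carrier_mat n n"
      using that Gset_SPall SPall_carrier by blast+
    have Y': "det Y \<cdot>\<^sub>m Y \<in> carrier_mat n n" using Y by simp
    have "det X \<cdot>\<^sub>m X * (det Y \<cdot>\<^sub>m Y) = det X \<cdot>\<^sub>m (X * (det Y \<cdot>\<^sub>m Y))"
      by (rule mult_smult_assoc_mat[OF X Y'])
    also have "\<dots> = det X \<cdot>\<^sub>m (det Y \<cdot>\<^sub>m (X * Y))" by (simp add: mult_smult_distrib[OF X Y])
    also have "\<dots> = (det X * det Y) \<cdot>\<^sub>m (X * Y)" by (rule smult_smult_mat')
    finally show ?thesis unfolding \<phi>_def det_mult[OF X Y] by simp
  qed
  have inj: "inj_on \<phi> (Gset n)"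
  proof (rule inj_onI)
    fix X Y assume X: "X \<in> Gset n" and Y: "Y \<in> Gset n" and eq: "\<phi> X = \<phi> Y"
    obtain p d where p: "p permutes {..<n}" and d: "d \<in> Sg n" and Xe: "X = SP n p d"
      and pr: "(\<Prod>j<n. d j) = 1" using X unfolding Gset_def by blast
    obtain q e where q: "q permutes {..<n}" and e: "e \<in> Sg n" and Ye: "Y = SP n q e"
      and pre: "(\<Prod>j<n. e j) = 1" using Y unfolding Gset_def by blast
    have ent: "det X * X $$ (i,j) = det Y * Y $$ (i,j)" if "i < n" "j < n" for i j
      using arg_cong[OF eq, of "\<lambda>A. A $$ (i,j)"] that Xe Ye unfolding \<phi>_def by simp
    show "X = Y"
    proof (cases "det X = det Y")
      case True
      have "det X \<noteq> 0" using det_Gset[OF X] by auto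
      hence "X $$ (i,j) = Y $$ (i,j)" if "i < n" "j < n" for i j using ent[OF that] True by simp
      thus ?thesis using Xe Ye by (intro eq_matI) auto
    next
      case False
      hence nd: "det X = - det Y" using det_Gset[OF X] det_Gset[OF Y] by auto
      have "det Y \<noteq> 0" using det_Gset[OF Y] by auto
      hence ent2: "X $$ (i,j) = - Y $$ (i,j)" if "i < n" "j < n" for i j
        using ent[OF that] nd \<open>det Y \<noteq> 0\<close>
        by (metis minus_equation_iff mult_cancel_left mult_minus_right mult_minus_left)
      define e' where "e' = (\<lambda>j. if j < n then - e j else 1)"
      have e': "e' \<in> Sg n" unfolding e'_def using Sg_mem[OF e] unfolding Sg_def by (auto; metis minus_minus)
      have "SP n p d = SP n q e'"
      proof (rule eq_matI)
        fix i j assume "i < dim_row (SP n q e')" "j < dim_col (SP n q e')"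
        hence ij: "i < n" "j < n" by auto
        show "SP n p d $$ (i, j) = SP n q e' $$ (i, j)"
          using ent2[OF ij] ij unfolding Xe Ye e'_def by auto
      qed auto
      hence "d = e'" using SP_eq_iff[OF p q d e'] by simp
      hence "(\<Prod>j<n. d j) = (\<Prod>j<n. - e j)" unfolding e'_def by simp
      also have "\<dots> = (-1) ^ n * (\<Prod>j<n. e j)"
      proof -
        have "(\<Prod>j<n. - e j) = (\<Prod>j<n. (-1) * e j)" by simp
        also have "\<dots> = (\<Prod>j<n. (-1::complex)) * (\<Prod>j<n. e j)" by (rule prod.distrib)
        finally show ?thesis by simp
      qed
      finally have "(1::complex) = -1" using pr pre odd by simp
      thus ?thesis by simp
    qed
  qed
  have fin: "finite (Mset n)" using card_Mset[OF n1] by (intro card_ge_0_finite) simp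
  have "\<phi> ` Gset n = Mset n"
    by (rule card_subset_eq[OF fin]) (use img card_image[OF inj] card_Mset[OF n1] card_Gset[OF n1] in auto)
  hence "\<phi> \<in> iso ((GLc n)\<lparr>carrier := Gset n\<rparr>) ((GLc n)\<lparr>carrier := Mset n\<rparr>)"
    unfolding iso_def hom_def bij_betw_def using img hom inj by auto
  hence "(GLc n)\<lparr>carrier := Gset n\<rparr> \<cong> (GLc n)\<lparr>carrier := Mset n\<rparr>" by (rule is_isoI)
  moreover have "group ((GLc n)\<lparr>carrier := Gset n\<rparr>)"
    by (rule subgroup.subgroup_is_group[OF Gset_subgroup GLc_group])
  ultimately show ?thesis using group.iso_sym by blast
qed


fun mp :: "nat \<Rightarrow> complex mat \<Rightarrow> nat \<Rightarrow> complex mat" where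
  "mp n x 0 = 1\<^sub>m n"
| "mp n x (Suc k) = mp n x k * x"

lemma sub_pow: "x [^]\<^bsub>(GLc n)\<lparr>carrier := C\<rparr>\<^esub> k = mp n x k"
  by (induct k) auto

lemma SP_pow:
  assumes p: "p permutes {..<n}"
  shows "mp n (SP n p d) k = SP n (p ^^ k) (\<lambda>j. \<Prod>i<k. d ((p ^^ i) j))"
proof (induct k)
  case 0
  show ?case using SP_one by (simp add: id_def)
next
  case (Suc k)
  have pk: "(p ^^ k) permutes {..<n}" by (rule permutes_funpow[OF p])
  have "mp n (SP n p d) (Suc k) = SP n (p ^^ k \<circ> p) (\<lambda>j. (\<Prod>i<k. d ((p ^^ i) (p j))) * d j)"
    using Suc SP_mult[OF pk p] by simp
  also have "p ^^ k \<circ> p = p ^^ Suc k" by (rule funpow_Suc_right[symmetric])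
  also have "(\<lambda>j. (\<Prod>i<k. d ((p ^^ i) (p j))) * d j) = (\<lambda>j. \<Prod>i<Suc k. d ((p ^^ i) j))"
  proof
    fix j
    have "(\<Prod>i<Suc k. d ((p ^^ i) j)) = d ((p ^^ 0) j) * (\<Prod>i<k. d ((p ^^ Suc i) j))"
      by (rule prod.lessThan_Suc_shift)
    also have "(\<lambda>i. d ((p ^^ Suc i) j)) = (\<lambda>i. d ((p ^^ i) (p j)))"
      by (simp add: funpow_swap1)
    finally show "(\<Prod>i<k. d ((p ^^ i) (p j))) * d j = (\<Prod>i<Suc k. d ((p ^^ i) j))" by simp
  qed
  finally show ?case .
qed

lemma mp_carrier: "x \<in> carrier_mat n n \<Longrightarrow> mp n x k \<in> carrier_mat n n"
  by (induct k) auto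

definition rot :: "nat \<Rightarrow> nat \<Rightarrow> nat" where
  "rot n j = (if j < n then Suc j mod n else j)"

lemma rot_Suc: "n \<ge> 1 \<Longrightarrow> rot (Suc n) = rot n \<circ> Transposition.transpose (n - 1) n"
  by (rule ext) (auto simp: rot_def Transposition.transpose_def mod_Suc)

lemma rot_1: "rot 1 = id"
  by (rule ext) (simp add: rot_def)

lemma rot_perm: "n \<ge> 1 \<Longrightarrow> rot n permutes {..<n} \<and> sign (rot n) = (-1) ^ (n - 1)"
proof (induct n rule: dec_induct[of 1])
  case base
  show ?case unfolding rot_1 by (rule conjI, rule permutes_id, simp)
next
  case (step n)
  have t: "Transposition.transpose (n - 1) n permutes {..<Suc n}" using step by (intro permutes_swap_id) auto
  have r: "rot n permutes {..<Suc n}" using step permutes_subset[of "rot n" "{..<n}" "{..<Suc n}"] by auto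
  have "rot (Suc n) permutes {..<Suc n}" unfolding rot_Suc[OF step(1)] by (rule permutes_compose[OF t r])
  moreover have "sign (rot (Suc n)) = (-1) ^ (Suc n - 1)"
    unfolding rot_Suc[OF step(1)]
    using step sign_compose[of "rot n" "Transposition.transpose (n - 1) n"]
      permutes_imp_permutation[OF _ r] permutes_imp_permutation[OF _ t] sign_swap_id[of "n - 1" n]
    by (cases n) auto
  ultimately show ?case ..
qed

lemma rot_pow: "j < n \<Longrightarrow> (rot n ^^ i) j = (j + i) mod n"
proof (induct i)
  case 0 thus ?case by simp
next
  case (Suc i)
  have "(j + i) mod n < n" using Suc by simp
  thus ?case using Suc by (simp add: rot_def mod_Suc_eq)
qed

lemma rot_pow_out: "n \<le> j \<Longrightarrow> (rot n ^^ i) j = j"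
  by (induct i) (auto simp: rot_def)

lemma rot_pow_n: "n \<ge> 1 \<Longrightarrow> rot n ^^ n = id"
proof
  fix j assume "n \<ge> 1"
  show "(rot n ^^ n) j = id j"
    by (cases "j < n") (simp_all add: rot_pow rot_pow_out)
qed


definition d0 :: "nat \<Rightarrow> complex" where "d0 j = (if j = 0 then -1 else 1)"

lemma neg_one_SP: "- 1\<^sub>m n = SP n id (\<lambda>j. if j < n then -1 else 1)"
  by (rule eq_matI) auto

lemma rot_elem:
  assumes n1: "n \<ge> 1" and ev: "even n"
  shows "SP n (rot n) d0 \<in> Mset n" "mp n (SP n (rot n) d0) n = - 1\<^sub>m n"
proof -
  have r: "rot n permutes {..<n}" and sr: "sign (rot n) = (-1) ^ (n - 1)" using rot_perm[OF n1] by auto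
  have d: "d0 \<in> Sg n" unfolding Sg_def d0_def using n1 by auto
  have pd: "(\<Prod>j<n. d0 j) = -1" unfolding d0_def using n1 by (subst prod.delta) auto
  have "odd (n - 1)" using ev n1 by auto
  hence "sign (rot n) = -1" using sr by simp
  hence "det (SP n (rot n) d0) = 1" unfolding SP_det[OF r] pd by simp
  thus "SP n (rot n) d0 \<in> Mset n" unfolding Mset_def SPall_def using r d by blast
  have pr: "(\<Prod>i<n. d0 ((rot n ^^ i) j)) = (if j < n then -1 else 1)" for j
  proof (cases "j < n")
    case False thus ?thesis by (simp add: rot_pow_out d0_def)
  next
    case True
    define a where "a = (if j = 0 then 0 else n - j)"
    have a: "a < n" unfolding a_def using True n1 by auto
    have "(\<Prod>i<n. d0 ((rot n ^^ i) j)) = (\<Prod>i<n. if i = a then -1 else 1)"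
    proof (rule prod.cong[OF refl])
      fix i assume i: "i \<in> {..<n}"
      have "(j + i) mod n = 0 \<longleftrightarrow> i = a"
      proof (cases "j + i < n")
        case True thus ?thesis unfolding a_def using i by auto
      next
        case False
        hence "(j + i) mod n = j + i - n" using i \<open>j < n\<close> by (simp add: le_mod_geq)
        thus ?thesis unfolding a_def using i \<open>j < n\<close> False by auto
      qed
      thus "d0 ((rot n ^^ i) j) = (if i = a then -1 else 1)"
        unfolding rot_pow[OF True] d0_def by simp
    qed
    also have "\<dots> = -1" using a by (subst prod.delta) auto
    finally show ?thesis using True by simp
  qed
  show "mp n (SP n (rot n) d0) n = - 1\<^sub>m n"
    unfolding SP_pow[OF r] rot_pow_n[OF n1] pr neg_one_SP ..
qed


lemma flipv_Sg: "(j::nat) < n \<Longrightarrow> k < n \<Longrightarrow> (\<lambda>x. if x = j \<or> x = k then -1 else (1::complex)) \<in> Sg n"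
  unfolding Sg_def by auto

lemma prod_flipv: "(j::nat) < n \<Longrightarrow> k < n \<Longrightarrow> j \<noteq> k \<Longrightarrow> (\<Prod>x<n. if x = j \<or> x = k then -1 else (1::complex)) = 1"
proof -
  assume jk: "j < n" "k < n" "j \<noteq> k"
  have "{x. x < n \<and> (if x = j \<or> x = k then -1 else (1::complex)) = -1} = {j, k}" using jk by auto
  thus ?thesis using prod_signs[OF flipv_Sg[OF jk(1,2)]] jk by simp
qed

lemma center_Gset:
  assumes n3: "n \<ge> 3" and z: "z \<in> Gset n" and cen: "\<forall>y\<in>Gset n. z * y = y * z"
  shows "z = 1\<^sub>m n \<or> z = - 1\<^sub>m n"
proof -
  obtain p d where p: "p permutes {..<n}" and d: "d \<in> Sg n" and ze: "z = SP n p d"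
    using z unfolding Gset_def by blast
  have pid: "p j = j" for j
  proof (rule ccontr)
    assume pj: "p j \<noteq> j"
    hence j: "j < n" using permutes_not_in[OF p, of j] by (cases "j < n") auto
    have pjn: "p j < n" using permutes_lt[OF p j] .
    have "\<exists>k. k < n \<and> k \<noteq> j \<and> k \<noteq> p j"
    proof -
      have "card {j, p j} \<le> 2" by (simp add: card_insert_if)
      hence "card ({..<n} - {j, p j}) \<ge> 1" using n3 j pjn by (simp add: card_Diff_subset)
      hence "{..<n} - {j, p j} \<noteq> {}" by (intro notI) simp
      thus ?thesis by auto
    qed
    then obtain k where k: "k < n" "k \<noteq> j" "k \<noteq> p j" by blast
    define f where "f = (\<lambda>x. if x = j \<or> x = k then -1 else (1::complex))"
    have f: "f \<in> Sg n" unfolding f_def using flipv_Sg[OF j k(1)] .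
    have "SP n id f \<in> Gset n" unfolding Gset_def f_def using prod_flipv[OF j k(1)] k(2) flipv_Sg[OF j k(1)] by fastforce
    hence "z * SP n id f = SP n id f * z" using cen by auto
    hence "SP n p (\<lambda>x. d x * f x) = SP n p (\<lambda>x. f (p x) * d x)"
      unfolding ze SP_mult[OF p permutes_id] SP_mult[OF permutes_id p] by simp
    hence "(\<lambda>x. d x * f x) = (\<lambda>x. f (p x) * d x)"
      using SP_eq_iff[OF p p Sg_mult[OF permutes_id d f] Sg_mult[OF p f d]] by simp
    hence "d j * f j = f (p j) * d j" by metis
    moreover have "f j = -1" "f (p j) = 1" unfolding f_def using k pj by auto
    ultimately show False using Sg_nz[OF d, of j] by simp
  qed
  hence pe: "p = id" by auto
  have dc: "d j = d 0" if j: "j < n" "j \<noteq> 0" for j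
  proof -
    have t: "Transposition.transpose 0 j permutes {..<n}" using j n3 by (intro permutes_swap_id) auto
    have "(\<Prod>x<n. (1::complex)) = 1" by simp
    hence "SP n (Transposition.transpose 0 j) (\<lambda>_. 1) \<in> Gset n" unfolding Gset_def using t one_Sg by blast
    hence "z * SP n (Transposition.transpose 0 j) (\<lambda>_. 1) = SP n (Transposition.transpose 0 j) (\<lambda>_. 1) * z"
      using cen by auto
    hence "SP n (Transposition.transpose 0 j) (\<lambda>x. d (Transposition.transpose 0 j x) * 1) =
      SP n (Transposition.transpose 0 j) (\<lambda>x. 1 * d x)"
      unfolding ze pe SP_mult[OF permutes_id t] SP_mult[OF t permutes_id] by simp
    hence "(\<lambda>x. d (Transposition.transpose 0 j x) * 1) = (\<lambda>x. 1 * d x)"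
      using SP_eq_iff[OF t t Sg_mult[OF t d one_Sg] Sg_mult[OF permutes_id one_Sg d]] by simp
    hence "d (Transposition.transpose 0 j 0) = d 0" by (metis mult_1 mult_1_right)
    thus ?thesis by simp
  qed
  have "d 0 = 1 \<or> d 0 = -1" using Sg_mem[OF d, of 0] n3 by simp
  thus ?thesis
  proof
    assume "d 0 = 1"
    hence "d = (\<lambda>_. 1)"
    proof (intro ext)
      fix x show "d x = 1" using dc[of x] Sg_out[OF d, of x] \<open>d 0 = 1\<close> by (cases "x < n"; cases "x = 0") auto
    qed
    thus ?thesis using SP_one[of n] unfolding ze pe by simp
  next
    assume "d 0 = -1"
    hence "d = (\<lambda>j. if j < n then -1 else 1)"
    proof (intro ext)
      fix x show "d x = (if x < n then -1 else 1)" using dc[of x] Sg_out[OF d, of x] \<open>d 0 = -1\<close> by (cases "x < n"; cases "x = 0") auto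
    qed
    thus ?thesis using neg_one_SP[of n, symmetric] unfolding ze pe by simp
  qed
qed

lemma sq_Gset2:
  assumes g: "g \<in> Gset 2"
  shows "mp 2 g 2 = 1\<^sub>m 2"
proof -
  obtain p d where p: "p permutes {..<2}" and d: "d \<in> Sg 2" and ge: "g = SP 2 p d"
    and pr: "(\<Prod>j<2. d j) = 1" using g unfolding Gset_def by blast
  have pr': "d 0 * d 1 = 1" using pr by (simp add: numeral_2_eq_2)
  have "mp 2 g 2 = SP 2 (p \<circ> p) (\<lambda>j. d (p j) * d j)"
    unfolding ge using SP_mult[OF p p] by (simp add: numeral_2_eq_2)
  also have "\<dots> = SP 2 id (\<lambda>_. 1)"
  proof -
    have p01: "p 0 < 2" "p 1 < 2" using permutes_lt[OF p] by auto
    have inj: "p 0 \<noteq> p 1" using permutes_inj[OF p] by (metis injD zero_neq_one)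
    have cs: "(p 0 = 0 \<and> p 1 = 1) \<or> (p 0 = 1 \<and> p 1 = 0)" using p01 inj by auto
    have out: "x \<ge> 2 \<Longrightarrow> p x = x" for x using permutes_not_in[OF p, of x] by auto
    have lt2: "x < 2 \<Longrightarrow> x = 0 \<or> x = 1" for x :: nat by auto
    have pp: "p \<circ> p = id"
    proof
      fix x show "(p \<circ> p) x = id x"
        using cs out[of x] lt2[of x] by (cases "x < 2") auto
    qed
    have dd: "(\<lambda>j. d (p j) * d j) = (\<lambda>_. 1)"
    proof
      fix x show "d (p x) * d x = 1"
        using cs out[of x] lt2[of x] Sg_sq[OF d, of x] pr' by (cases "x < 2") (auto simp: mult.commute)
    qed
    show ?thesis unfolding pp dd ..
  qed
  finally show ?thesis using SP_one by simp
qed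


lemma odd_dvd_2: "odd (t::nat) \<Longrightarrow> t dvd 2 * x \<Longrightarrow> t dvd x"
  by (smt (verit, ccfv_SIG) dvd_add_times_triv_right_iff dvd_refl dvd_trans
    even_Suc mult_Suc_right mult_dvd_mono mult_of_nat_commute of_nat_numeral)

lemma odd_dvd_pow2: "odd (t::nat) \<Longrightarrow> t dvd 2^a \<Longrightarrow> t = 1"
proof (induct a)
  case 0 thus ?case by simp
next
  case (Suc a)
  have "t dvd 2 * 2^a" using Suc.prems(2) by (simp only: power_Suc)
  hence "t dvd 2^a" by (rule odd_dvd_2[OF Suc.prems(1)])
  thus ?case by (rule Suc.hyps[OF Suc.prems(1)])
qed

lemma two_factor: "(n::nat) > 0 \<Longrightarrow> \<exists>a q. n = 2^a * q \<and> odd q"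
proof (induct n rule: less_induct)
  case (less n)
  show ?case
  proof (cases "odd n")
    case True thus ?thesis by (intro exI[of _ 0] exI[of _ n]) simp
  next
    case False
    then obtain k where k: "n = 2 * k" by blast
    hence "k < n" "k > 0" using less by auto
    then obtain a q where "k = 2^a * q" "odd q" using less by blast
    thus ?thesis using k by (intro exI[of _ "Suc a"] exI[of _ q]) simp
  qed
qed

lemma funpow_period: "(f ^^ l) x = x \<Longrightarrow> (f ^^ (l * k)) x = x"
proof (induct k)
  case (Suc k)
  have e: "l * Suc k = l * k + l" by simp
  have "(f ^^ (l * Suc k)) x = (f ^^ (l * k)) ((f ^^ l) x)"
    unfolding e funpow_add o_apply ..
  thus ?case using Suc by simp
qed simp

lemma prod_lessThan_add: "(\<Prod>i<a + b. f i) = (\<Prod>i<a. f i) * (\<Prod>i<b. f (a + i)) " for f :: "nat \<Rightarrow> complex"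
  by (induct b) (simp_all add: mult.assoc)

lemma prod_sq1:
  assumes "\<And>i. (g i :: complex) * g i = 1"
  shows "(\<Prod>i\<in>A. g i) * (\<Prod>i\<in>A. g i) = 1"
  by (simp add: prod.distrib[symmetric] assms)

context
  fixes n m q :: nat and P :: "nat \<Rightarrow> nat" and E :: "nat \<Rightarrow> complex" and a :: nat
  assumes P: "P permutes {..<n}" and E: "E \<in> Sg n" and m: "m = 2 ^ a"
    and nmq: "n = m * q" and q: "odd q"
    and per: "\<And>j. j < n \<Longrightarrow> (P ^^ m) j = j"
    and pr: "\<And>j. j < n \<Longrightarrow> (\<Prod>i<m. E ((P ^^ i) j)) = -1"
begin

lemma m_pos: "m \<ge> 1" using m by simp

lemma no_short: 
  assumes j: "j < n" and l: "0 < l" "l < m" and lj: "(P ^^ l) j = j"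
  shows False
proof -
  define l0 where "l0 = (LEAST l. 0 < l \<and> (P ^^ l) j = j)"
  have l0: "0 < l0 \<and> (P ^^ l0) j = j" unfolding l0_def by (rule LeastI[of _ l]) (use l lj in auto)
  have l0le: "l0 \<le> l" unfolding l0_def by (rule Least_le) (use l lj in auto)
  have minl: "\<And>r. 0 < r \<Longrightarrow> r < l0 \<Longrightarrow> (P ^^ r) j \<noteq> j"
    unfolding l0_def using not_less_Least by blast
  have e: "P ^^ m = P ^^ (m mod l0 + l0 * (m div l0))" by simp
  have "(P ^^ m) j = (P ^^ (m mod l0)) ((P ^^ (l0 * (m div l0))) j)"
    unfolding e funpow_add o_apply ..
  also have "(P ^^ (l0 * (m div l0))) j = j" using funpow_period[where f=P and l=l0 and x=j and k="m div l0"] l0 by simp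
  finally have "(P ^^ (m mod l0)) j = j" using per[OF j] by simp
  hence pm: "(P ^^ (m mod l0)) j = j" .
  have "m mod l0 = 0"
  proof (rule ccontr)
    assume "m mod l0 \<noteq> 0"
    hence "0 < m mod l0" by simp
    moreover have "m mod l0 < l0" using l0 by simp
    ultimately show False using minl pm by blast
  qed
  then obtain t where t: "m = l0 * t" by auto
  have "even t"
  proof (rule ccontr)
    assume "odd t"
    have "t dvd m" unfolding t by simp
    hence "t dvd 2^a" using m by simp
    hence "t = 1" using odd_dvd_pow2[of t a] \<open>odd t\<close> by blast
    thus False using t l0le l by simp
  qed
  then obtain t2 where t2: "t = 2 * t2" by blast
  define s where "s = (\<Prod>i<l0 * t2. E ((P ^^ i) j))"
  have me: "m = l0 * t2 + l0 * t2" using t t2 by simp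
  have "(\<Prod>i<m. E ((P ^^ i) j)) = (\<Prod>i<l0 * t2 + l0 * t2. E ((P ^^ i) j))"
    by (simp only: me)
  also have "\<dots> = s * (\<Prod>i<l0 * t2. E ((P ^^ (l0 * t2 + i)) j))"
    unfolding s_def by (rule prod_lessThan_add)
  also have "(\<lambda>i. E ((P ^^ (l0 * t2 + i)) j)) = (\<lambda>i. E ((P ^^ i) j))"
  proof
    fix i
    have e: "l0 * t2 + i = i + l0 * t2" by simp
    have "(P ^^ (l0 * t2 + i)) j = (P ^^ i) ((P ^^ (l0 * t2)) j)"
      unfolding e funpow_add o_apply ..
    thus "E ((P ^^ (l0 * t2 + i)) j) = E ((P ^^ i) j)" using funpow_period[where f=P and l=l0 and x=j and k=t2] l0 by simp
  qed
  also have "s * (\<Prod>i<l0 * t2. E ((P ^^ i) j)) = 1"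
    unfolding s_def by (rule prod_sq1) (rule Sg_sq[OF E])
  finally show False using pr[OF j] by simp
qed

definition orb :: "nat \<Rightarrow> nat set" where "orb j = (\<lambda>i. (P ^^ i) j) ` {..<m}"

lemma orb_inj: "j < n \<Longrightarrow> inj_on (\<lambda>i. (P ^^ i) j) {..<m}"
proof (rule inj_onI, rule ccontr)
  fix x y assume j: "j < n" and x: "x \<in> {..<m}" and y: "y \<in> {..<m}"
    and eq: "(P ^^ x) j = (P ^^ y) j" and ne: "x \<noteq> y"
  have ip: "inj P" using permutes_inj[OF P] .
  show False
  proof (cases "x < y")
    case True
    have "(P ^^ (y - x)) j = j" using funpow_diff[OF ip _ eq] True by simp
    moreover have "0 < y - x" "y - x < m" using True y by auto
    ultimately show False using no_short[OF j] by blast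
  next
    case False
    hence "y < x" using ne by simp
    have "(P ^^ (x - y)) j = j" using funpow_diff[OF ip _ eq[symmetric]] \<open>y < x\<close> by simp
    moreover have "0 < x - y" "x - y < m" using \<open>y < x\<close> x by auto
    ultimately show False using no_short[OF j] by blast
  qed
qed

lemma orb_card: "j < n \<Longrightarrow> card (orb j) = m"
  unfolding orb_def using card_image[OF orb_inj] by simp

lemma orb_prod: "j < n \<Longrightarrow> (\<Prod>x\<in>orb j. E x) = -1"
  unfolding orb_def using prod.reindex[OF orb_inj, of j E] pr by (simp add: o_def)

lemma orb_sub: "j < n \<Longrightarrow> orb j \<subseteq> {..<n}"
  unfolding orb_def using permutes_lt[OF permutes_funpow[OF P]] by auto

definition cl :: "nat set \<Rightarrow> bool" where "cl S \<longleftrightarrow> (\<forall>x<n. x \<in> S \<longleftrightarrow> P x \<in> S)"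

lemma orb_cl: "j < n \<Longrightarrow> cl (orb j)"
  unfolding cl_def
proof (intro allI impI iffI)
  fix x assume j: "j < n" and x: "x < n" and xo: "x \<in> orb j"
  then obtain i where i: "i < m" and xi: "x = (P ^^ i) j" unfolding orb_def by auto
  have "P x = (P ^^ Suc i) j" using xi by simp
  show "P x \<in> orb j"
  proof (cases "Suc i < m")
    case True thus ?thesis using \<open>P x = (P ^^ Suc i) j\<close> unfolding orb_def by blast
  next
    case False
    hence "Suc i = m" using i by simp
    hence eq0: "P x = (P ^^ 0) j" using \<open>P x = (P ^^ Suc i) j\<close> per[OF j] by simp
    have "0 \<in> {..<m}" using m_pos by simp
    thus ?thesis unfolding orb_def by (rule image_eqI[where f="\<lambda>i. (P ^^ i) j", OF eq0])
  qed
next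
  fix x assume j: "j < n" and x: "x < n" and xo: "P x \<in> orb j"
  then obtain i where i: "i < m" and xi: "P x = (P ^^ i) j" unfolding orb_def by auto
  have ip: "inj P" using permutes_inj[OF P] .
  show "x \<in> orb j"
  proof (cases i)
    case 0
    have "P x = (P ^^ m) j" using xi 0 per[OF j] by simp
    also have "\<dots> = P ((P ^^ (m - 1)) j)"
    proof -
      obtain m' where m': "m = Suc m'" using m_pos by (cases m) auto
      show ?thesis unfolding m' by simp
    qed
    finally have "x = (P ^^ (m - 1)) j" using injD[OF ip] by blast
    thus ?thesis unfolding orb_def using m_pos by auto
  next
    case (Suc i')
    hence "P x = P ((P ^^ i') j)" using xi by simp
    hence "x = (P ^^ i') j" using injD[OF ip] by blast
    thus ?thesis unfolding orb_def using Suc i by auto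
  qed
qed

lemma cl_orb_sub: "cl S \<Longrightarrow> j \<in> S \<Longrightarrow> j < n \<Longrightarrow> orb j \<subseteq> S"
proof -
  assume S: "cl S" and jS: "j \<in> S" and j: "j < n"
  have "(P ^^ i) j \<in> S" for i
  proof (induct i)
    case (Suc i)
    have "(P ^^ i) j < n" using permutes_lt[OF permutes_funpow[OF P] j] .
    thus ?case using Suc S unfolding cl_def by auto
  qed (use jS in simp)
  thus ?thesis unfolding orb_def by auto
qed

lemma cl_diff: "cl S \<Longrightarrow> cl T \<Longrightarrow> cl (S - T)"
  unfolding cl_def by blast

lemma cl_prod: "\<forall>S. S \<subseteq> {..<n} \<and> cl S \<and> card S = k \<longrightarrow> m dvd card S \<and> (\<Prod>x\<in>S. E x) = (-1) ^ (card S div m)"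
proof (induct k rule: less_induct)
  case (less k)
  show ?case
  proof (intro allI impI, elim conjE)
    fix S assume Sn: "S \<subseteq> {..<n}" and S: "cl S" and k: "card S = k"
    have fS: "finite S" using Sn finite_subset by blast
    show "m dvd card S \<and> (\<Prod>x\<in>S. E x) = (-1) ^ (card S div m)"
    proof (cases "S = {}")
      case True thus ?thesis by simp
    next
      case False
      then obtain j where jS: "j \<in> S" by blast
      have j: "j < n" using jS Sn by auto
      have oS: "orb j \<subseteq> S" by (rule cl_orb_sub[OF S jS j])
      have fo: "finite (orb j)" unfolding orb_def by simp
      have cD: "card (S - orb j) = card S - m" using card_Diff_subset[OF fo oS] orb_card[OF j] by simp
      have cS: "card S \<ge> m" using card_mono[OF fS oS] orb_card[OF j] by simp
      have lt: "card (S - orb j) < k" using cD cS m_pos k by simp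
      have IH: "m dvd card (S - orb j) \<and> (\<Prod>x\<in>S - orb j. E x) = (-1) ^ (card (S - orb j) div m)"
        using less[OF lt] Sn cl_diff[OF S orb_cl[OF j]] by blast
      then obtain r where r: "card (S - orb j) = m * r" by blast
      have cSr: "card S = m * Suc r" using cD cS r by simp
      have "(\<Prod>x\<in>S. E x) = (\<Prod>x\<in>orb j. E x) * (\<Prod>x\<in>S - orb j. E x)"
        using prod.subset_diff[OF oS fS, of E] by (simp add: mult.commute)
      also have "\<dots> = (-1) ^ Suc r" using orb_prod[OF j] IH r m_pos by simp
      finally show ?thesis using cSr m_pos by simp
    qed
  qed
qed

lemma core_prod: "(\<Prod>j<n. E j) = -1"
proof -
  have "cl {..<n}" unfolding cl_def using permutes_lt[OF P] by auto
  hence "(\<Prod>j<n. E j) = (-1) ^ (card {..<n} div m)" using cl_prod[where k=n] by simp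
  moreover have "card {..<n} div m = q" using nmq m_pos by simp
  ultimately show ?thesis using q by simp
qed

end

lemma mp_add: "x \<in> carrier_mat n n \<Longrightarrow> mp n x (a + b) = mp n x a * mp n x b"
proof (induct b)
  case 0 thus ?case using right_mult_one_mat[OF mp_carrier[OF 0]] by simp
next
  case (Suc b)
  have "mp n x (a + Suc b) = (mp n x a * mp n x b) * x" using Suc by simp
  also have "\<dots> = mp n x a * (mp n x b * x)"
    by (rule assoc_mult_mat[OF mp_carrier[OF Suc(2)] mp_carrier[OF Suc(2)] Suc(2)])
  finally show ?case by simp
qed

lemma mp_mult: "x \<in> carrier_mat n n \<Longrightarrow> mp n x (q * k) = mp n (mp n x q) k"
proof (induct k)
  case (Suc k)
  have e: "q * Suc k = q * k + q" by simp
  have "mp n x (q * Suc k) = mp n x (q * k) * mp n x q" unfolding e by (rule mp_add[OF Suc(2)])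
  thus ?case using Suc by simp
qed simp

lemma no_neg_root:
  assumes ev: "even n" and n1: "n \<ge> 1" and g: "g \<in> Gset n" and gn: "mp n g n = - 1\<^sub>m n"
  shows False
proof -
  obtain a q where aq: "n = 2^a * q" and q: "odd q" using two_factor[of n] n1 by auto
  define m where "m = (2::nat) ^ a"
  have grG: "group ((GLc n)\<lparr>carrier := Gset n\<rparr>)"
    by (rule subgroup.subgroup_is_group[OF Gset_subgroup GLc_group])
  have "mp n g q \<in> Gset n"
    using monoid.nat_pow_closed[OF group.is_monoid[OF grG], of g q] g by (simp add: sub_pow)
  then obtain P E where P: "P permutes {..<n}" and E: "E \<in> Sg n" and h: "mp n g q = SP n P E"
    and prE: "(\<Prod>j<n. E j) = 1" unfolding Gset_def by blast
  have gc: "g \<in> carrier_mat n n" using g Gset_SPall SPall_carrier by blast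
  have "SP n (P ^^ m) (\<lambda>j. \<Prod>i<m. E ((P ^^ i) j)) = - 1\<^sub>m n"
    using gn mp_mult[OF gc, of q m] h SP_pow[OF P, of E m] aq unfolding m_def by (simp add: mult.commute)
  hence ent: "SP n (P ^^ m) (\<lambda>j. \<Prod>i<m. E ((P ^^ i) j)) $$ (j, j) = -1" if "j < n" for j
    using that by simp
  have per: "(P ^^ m) j = j" and pr: "(\<Prod>i<m. E ((P ^^ i) j)) = -1" if j: "j < n" for j
    using ent[OF j] j by (simp_all split: if_splits)
  have "(\<Prod>j<n. E j) = -1"
    by (rule core_prod[OF P E m_def _ q per pr]) (simp add: aq m_def)
  thus False using prE by simp
qed

lemma not_iso_even:
  assumes ev: "even n" and n2: "n \<ge> 2"
    and iso: "(GLc n)\<lparr>carrier := Mset n\<rparr> \<cong> (GLc n)\<lparr>carrier := Gset n\<rparr>"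
  shows False
proof -
  let ?M = "(GLc n)\<lparr>carrier := Mset n\<rparr>" and ?G = "(GLc n)\<lparr>carrier := Gset n\<rparr>"
  have n1: "n \<ge> 1" using n2 by simp
  obtain f where f: "f \<in> iso ?M ?G" using iso unfolding is_iso_def by blast
  have grM: "group ?M" by (rule subgroup.subgroup_is_group[OF Mset_subgroup GLc_group])
  have grG: "group ?G" by (rule subgroup.subgroup_is_group[OF Gset_subgroup GLc_group])
  have hom: "f \<in> hom ?M ?G" using f by (simp add: iso_def)
  have bij: "bij_betw f (Mset n) (Gset n)" using f by (simp add: iso_def)
  define c where "c = SP n (rot n) d0"
  have cM: "c \<in> Mset n" and cn: "mp n c n = - 1\<^sub>m n" using rot_elem[OF n1 ev] c_def by auto
  have zM: "- 1\<^sub>m n \<in> Mset n"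
    using monoid.nat_pow_closed[OF group.is_monoid[OF grM], of c n] cM cn by (simp add: sub_pow)
  have oneM: "1\<^sub>m n \<in> Mset n" using monoid.one_closed[OF group.is_monoid[OF grM]] by simp
  have fpow: "f (mp n c n) = mp n (f c) n"
    using hom_nat_pow[OF hom _ grM grG, of c n] cM by (simp add: sub_pow)
  have f1: "f (1\<^sub>m n) = 1\<^sub>m n" using hom_one[OF hom grM grG] by simp
  have ne: "- 1\<^sub>m n \<noteq> (1\<^sub>m n :: complex mat)"
  proof
    assume "- 1\<^sub>m n = (1\<^sub>m n :: complex mat)"
    hence "(- 1\<^sub>m n :: complex mat) $$ (0,0) = 1\<^sub>m n $$ (0,0)" by simp
    thus False using n1 by simp
  qed
  have fz1: "f (- 1\<^sub>m n) \<noteq> 1\<^sub>m n"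
    using bij_betw_imp_inj_on[OF bij] zM oneM ne f1 by (metis inj_onD)
  have fzG: "f (- 1\<^sub>m n) \<in> Gset n" using bij zM bij_betwE by blast
  have fcG: "f c \<in> Gset n" using bij cM bij_betwE by blast
  have cen: "\<forall>y\<in>Gset n. f (- 1\<^sub>m n) * y = y * f (- 1\<^sub>m n)"
  proof
    fix y assume "y \<in> Gset n"
    then obtain x where x: "x \<in> Mset n" and y: "y = f x" using bij by (metis bij_betw_imp_surj_on imageE)
    have xc: "x \<in> carrier_mat n n" using x SPall_carrier unfolding Mset_def by blast
    have "- 1\<^sub>m n * x = x * - 1\<^sub>m n" using xc by simp
    hence "f (- 1\<^sub>m n * x) = f (x * - 1\<^sub>m n)" by simp
    thus "f (- 1\<^sub>m n) * y = y * f (- 1\<^sub>m n)"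
      using hom_mult[OF hom, of "- 1\<^sub>m n" x] hom_mult[OF hom, of x "- 1\<^sub>m n"] zM x y by simp
  qed
  have gn: "mp n (f c) n = f (- 1\<^sub>m n)" using fpow cn by simp
  show False
  proof (cases "n = 2")
    case True
    thus False using sq_Gset2[OF fcG[unfolded True]] gn fz1 by simp
  next
    case False
    hence "n \<ge> 3" using n2 by simp
    hence "f (- 1\<^sub>m n) = - 1\<^sub>m n" using center_Gset[OF _ fzG cen] fz1 by blast
    thus False using no_neg_root[OF ev n1 fcG] gn by simp
  qed
qed


theorem mainTheorem19:
  fixes n :: nat
  assumes "n \<ge> 2"
  shows "M_n12 n = {A. signed_perm_mat n A \<and> det A = 1}
    \<and> card (M_n12 n) = 2 ^ (n - 1) * fact n
    \<and> (((GLc n)\<lparr>carrier := M_n12 n\<rparr> \<cong> (GLc n)\<lparr>carrier := G22n n\<rparr>) \<longleftrightarrow> odd n)"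
proof (intro conjI)
  show "M_n12 n = {A. signed_perm_mat n A \<and> det A = 1}" by (rule first_conj)
  show "card (M_n12 n) = 2 ^ (n - 1) * fact n" unfolding M_eq using card_Mset assms by simp
  show "((GLc n)\<lparr>carrier := M_n12 n\<rparr> \<cong> (GLc n)\<lparr>carrier := G22n n\<rparr>) \<longleftrightarrow> odd n"
    unfolding M_eq G22n_eq using iso_odd not_iso_even[OF _ assms] by blast
qed

end
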